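(* Let $(p_n)_{n\ge1}$ be the strictly increasing enumeration of all primes and let $S=\big\langle \frac{p_n+1}{p_n^2}: n\in\mathbb N\big\rangle\subseteq\mathbb Q_{\ge0}$. Then $\mathcal A(S)=\{\frac{p_n+1}{p_n^2}: n\in\mathbb N\}$, every element of $S$ is divisible in $S$ by only finitely many atoms, and $S$ is an FFM.
   Context: Monoids are commutative, cancellative, with identity, written additively; $a\mid_S b$ means $b-a\in S$. $\mathcal A(S)$ is the set of atoms. An FFM is a monoid in which every element is a finite sum of atoms and has only finitely many factorizations (up to order). *)

theory Defs
  imports Complex_Main "HOL-Computational_Algebra.Primes" "HOL-Library.Multiset"
begin

inductive_set mon_gen :: "rat set \<Rightarrow> rat set" for G :: "rat set" where
  zero: "0 \<in> mon_gen G"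
| add_gen: "g \<in> G \<Longrightarrow> x \<in> mon_gen G \<Longrightarrow> g + x \<in> mon_gen G"

definition mon_units :: "rat set \<Rightarrow> rat set" where
  "mon_units M = {u \<in> M. - u \<in> M}"

definition mon_dvd :: "rat set \<Rightarrow> rat \<Rightarrow> rat \<Rightarrow> bool" where
  "mon_dvd M a b \<longleftrightarrow> b - a \<in> M"

definition atoms :: "rat set \<Rightarrow> rat set" where
  "atoms M = {a \<in> M. a \<notin> mon_units M \<and>
      (\<forall>b\<in>M. \<forall>c\<in>M. a = b + c \<longrightarrow> b \<in> mon_units M \<or> c \<in> mon_units M)}"

definition factorizations :: "rat set \<Rightarrow> rat \<Rightarrow> rat multiset set" where
  "factorizations M x = {m. set_mset m \<subseteq> atoms M \<and> sum_mset m = x}"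

definition FFM :: "rat set \<Rightarrow> bool" where
  "FFM M \<longleftrightarrow> (\<forall>x\<in>M. factorizations M x \<noteq> {} \<and> finite (factorizations M x))"

definition prime_gens :: "rat set" where
  "prime_gens = {of_nat (p + 1) / of_nat (p ^ 2) | p :: nat. prime p}"

end

theory Submission
  imports Defs
begin

definition g :: "nat \<Rightarrow> rat" where "g p = of_nat (p + 1) / of_nat (p ^ 2)"

abbreviation "S \<equiv> mon_gen prime_gens"

lemma pg_eq: "prime_gens = g ` {p. prime p}"
  unfolding prime_gens_def g_def by auto

lemma g_pos: "prime p \<Longrightarrow> g p > 0"
  unfolding g_def using prime_gt_0_nat by (simp add: divide_pos_pos)

lemma S_repr1: "x \<in> S \<Longrightarrow> \<exists>m. (\<forall>q\<in>#m. prime q) \<and> x = (\<Sum>q\<in>#m. g q)"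
proof (induction rule: mon_gen.induct)
  case zero
  then show ?case by (intro exI[of _ "{#}"]) simp
next
  case (add_gen a x)
  then obtain m where m: "\<forall>q\<in>#m. prime q" "x = (\<Sum>q\<in>#m. g q)" by blast
  from add_gen.hyps(1) obtain p where p: "prime p" "a = g p" unfolding pg_eq by blast
  show ?case using m p by (intro exI[of _ "add_mset p m"]) simp
qed

lemma S_repr2: "(\<forall>q\<in>#m. prime q) \<Longrightarrow> (\<Sum>q\<in>#m. g q) \<in> S"
proof (induction m)
  case empty
  then show ?case by (simp add: mon_gen.zero)
next
  case (add p m)
  then show ?case by (simp add: mon_gen.add_gen pg_eq)
qed

lemma S_repr: "x \<in> S \<longleftrightarrow> (\<exists>m. (\<forall>q\<in>#m. prime q) \<and> x = (\<Sum>q\<in>#m. g q))"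
  using S_repr1 S_repr2 by blast

lemma sumg_nonneg: "(\<forall>q\<in>#m. prime q) \<Longrightarrow> (\<Sum>q\<in>#m. g q) \<ge> 0"
  by (induction m) (auto intro: add_nonneg_nonneg less_imp_le g_pos)

lemma sumg_zero: "(\<forall>q\<in>#m. prime q) \<Longrightarrow> (\<Sum>q\<in>#m. g q) = 0 \<Longrightarrow> m = {#}"
proof (cases m)
  case (add p m')
  assume a: "\<forall>q\<in>#m. prime q" "(\<Sum>q\<in>#m. g q) = 0"
  have "g p > 0" using a add g_pos by auto
  moreover have "(\<Sum>q\<in>#m'. g q) \<ge> 0" using a add sumg_nonneg by auto
  ultimately show ?thesis using a add by simp
qed simp

lemma S_nonneg: "x \<in> S \<Longrightarrow> x \<ge> 0"
proof -
  assume "x \<in> S"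
  then obtain m where "\<forall>q\<in>#m. prime q" "x = (\<Sum>q\<in>#m. g q)" using S_repr1 by blast
  then show ?thesis using sumg_nonneg by simp
qed

lemma units_S: "mon_units S = {0}"
proof -
  have "u = 0" if "u \<in> S" "- u \<in> S" for u
    using S_nonneg[OF that(1)] S_nonneg[OF that(2)] by simp
  then show ?thesis unfolding mon_units_def by (auto intro: mon_gen.zero)
qed

lemma split_sum: "(\<Sum>q\<in>#m. g q) = of_nat (count m p) * g p + (\<Sum>q\<in>#filter_mset (\<lambda>q. q \<noteq> p) m. g q)"
proof -
  have "m = filter_mset (\<lambda>q. q = p) m + filter_mset (\<lambda>q. \<not> q = p) m"
    by (rule multiset_partition)
  also have "filter_mset (\<lambda>q. q = p) m = replicate_mset (count m p) p"
    by (rule filter_eq_replicate_mset)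
  finally have "(\<Sum>q\<in>#m. g q) = (\<Sum>q\<in>#replicate_mset (count m p) p + filter_mset (\<lambda>q. q \<noteq> p) m. g q)"
    by simp
  then show ?thesis by (simp add: sum_mset_replicate_mset)
qed

lemma padic: "prime p \<Longrightarrow> (\<forall>q\<in>#m. prime q \<and> q \<noteq> p) \<Longrightarrow>
   \<exists>(N::int) (D::nat). D > 0 \<and> \<not> p dvd D \<and> (\<Sum>q\<in>#m. g q) = of_int N / of_nat D"
proof (induction m)
  case empty
  then show ?case by (intro exI[of _ 0] exI[of _ 1]) (auto simp: prime_gt_1_nat)
next
  case (add q m)
  then obtain N D where ND: "D > (0::nat)" "\<not> p dvd D" "(\<Sum>q\<in>#m. g q) = of_int N / of_nat D" by auto
  have q: "prime q" "q \<noteq> p" using add by auto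
  have "\<not> p dvd q" using q add.prems(1) primes_dvd_imp_eq by blast
  then have "\<not> p dvd q^2" using add.prems(1) prime_dvd_power_nat by blast
  then have nd: "\<not> p dvd D * q^2" using ND(2) add.prems(1) prime_dvd_mult_nat by blast
  have qpos: "q > 0" using q prime_gt_0_nat by blast
  have "(\<Sum>q\<in>#add_mset q m. g q) = g q + of_int N / of_nat D"
    by (simp add: ND(3))
  also have "\<dots> = of_int (N * q^2 + (q+1) * D) / of_nat (D * q^2)"
    using ND(1) qpos by (simp add: g_def field_simps)
  finally have "(\<Sum>q\<in>#add_mset q m. g q) = of_int (N * q^2 + (q+1) * D) / of_nat (D * q^2)" .
  then show ?case using nd ND(1) qpos by (intro exI[of _ "N * q^2 + (q+1) * D"] exI[of _ "D * q^2"]) auto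
qed

lemma key: assumes "prime p" "of_nat (c+1) * g p = of_int N / of_nat D" "D > 0" "\<not> p dvd D"
  shows "p^2 dvd (c+1)"
proof -
  have pp: "p > 0" using assms(1) prime_gt_0_nat by blast
  have "of_nat ((c+1) * (p+1) * D) = (of_int (N * p^2) :: rat)"
    using assms(2,3) pp by (simp add: g_def field_simps)
  then have "int ((c+1) * (p+1) * D) = N * int (p^2)"
    by (metis of_int_eq_iff of_int_of_nat_eq of_nat_power)
  then have e: "int ((c+1) * ((p+1) * D)) = int (p^2) * N" by (simp add: algebra_simps)
  have "int (p^2) dvd int ((c+1) * ((p+1) * D))" unfolding e by (rule dvd_triv_left)
  then have d: "p^2 dvd (c+1) * ((p+1) * D)" using int_dvd_int_iff by blast
  have "\<not> p dvd (p+1)"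
    using assms(1) by (metis dvd_add_right_iff dvd_refl nat_dvd_1_iff_1 not_prime_1)
  then have "\<not> p dvd (p+1) * D" using assms(1,4) prime_dvd_mult_nat by blast
  then have "coprime p ((p+1) * D)" using assms(1) prime_imp_coprime_nat by blast
  then have "coprime (p^2) ((p+1) * D)" by simp
  then show ?thesis using d coprime_dvd_mult_left_iff by blast
qed


lemma sum_in_S: "set_mset m \<subseteq> G \<Longrightarrow> sum_mset m \<in> mon_gen G"
  by (induction m) (auto intro: mon_gen.intros)

lemma atoms_S: "atoms S = prime_gens"
proof (intro set_eqI iffI)
  fix a assume a: "a \<in> atoms S"
  then have aS: "a \<in> S" and an: "a \<noteq> 0" and ad: "\<forall>b\<in>S. \<forall>c\<in>S. a = b + c \<longrightarrow> b = 0 \<or> c = 0"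
    unfolding atoms_def units_S by auto
  obtain m where m: "\<forall>q\<in>#m. prime q" "a = (\<Sum>q\<in>#m. g q)" using S_repr1[OF aS] by blast
  have "m \<noteq> {#}" using m an by auto
  then obtain p m' where pm: "m = add_mset p m'" by (metis multiset_cases)
  have "g p \<in> S" using S_repr2[of "{#p#}"] m pm by simp
  moreover have "(\<Sum>q\<in>#m'. g q) \<in> S" using S_repr2[of m'] m pm by simp
  moreover have ae: "a = g p + (\<Sum>q\<in>#m'. g q)" using m pm by simp
  ultimately have "g p = 0 \<or> (\<Sum>q\<in>#m'. g q) = 0" using ad by blast
  moreover have "g p > 0" using g_pos m pm by simp
  ultimately have "a = g p" using ae by auto
  then show "a \<in> prime_gens" unfolding pg_eq using m pm by auto
next
  fix a assume "a \<in> prime_gens"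
  then obtain p where p: "prime p" "a = g p" unfolding pg_eq by auto
  have aS: "a \<in> S" using S_repr2[of "{#p#}"] p by simp
  have an: "a \<noteq> 0" using g_pos[OF p(1)] p(2) by simp
  have "b = 0 \<or> c = 0" if bc: "b \<in> S" "c \<in> S" "a = b + c" for b c
  proof (rule ccontr)
    assume nz: "\<not> (b = 0 \<or> c = 0)"
    obtain mb where mb: "\<forall>q\<in>#mb. prime q" "b = (\<Sum>q\<in>#mb. g q)" using S_repr1[OF bc(1)] by blast
    obtain mc where mc: "\<forall>q\<in>#mc. prime q" "c = (\<Sum>q\<in>#mc. g q)" using S_repr1[OF bc(2)] by blast
    define m where "m = mb + mc"
    have mp: "\<forall>q\<in>#m. prime q" using mb mc m_def by auto
    have ms: "g p = (\<Sum>q\<in>#m. g q)" using bc p mb mc m_def by simp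
    have mbne: "mb \<noteq> {#}" using nz mb by auto
    have mcne: "mc \<noteq> {#}" using nz mc by auto
    define R where "R = (\<Sum>q\<in>#filter_mset (\<lambda>q. q \<noteq> p) m. g q)"
    have fp: "\<forall>q\<in>#filter_mset (\<lambda>q. q \<noteq> p) m. prime q \<and> q \<noteq> p" using mp by auto
    have fp0: "\<forall>q\<in>#filter_mset (\<lambda>q. q \<noteq> p) m. prime q" using fp by blast
    have Rnn: "R \<ge> 0" unfolding R_def by (rule sumg_nonneg[OF fp0])
    have eq: "g p = of_nat (count m p) * g p + R" using ms split_sum[of m p] R_def by simp
    show False
    proof (cases "count m p")
      case 0
      obtain N D where ND: "D > 0" "\<not> p dvd D" "R = of_int N / of_nat D"
        using padic[OF p(1) fp] R_def by auto
      have "of_nat (0+1) * g p = of_int N / of_nat D" using eq 0 ND by simp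
      then have "p^2 dvd 0+1" using key[OF p(1) _ ND(1,2)] by blast
      then show False using p(1) prime_gt_1_nat by simp
    next
      case (Suc k)
      have "of_nat k * g p + R = 0" using eq Suc by (simp add: algebra_simps)
      moreover have "of_nat k * g p \<ge> 0" using g_pos[OF p(1)] by simp
      ultimately have R0: "R = 0" and "of_nat k * g p = 0" using Rnn by linarith+
      then have k0: "k = 0" using g_pos[OF p(1)] by auto
      have fp': "\<forall>q\<in>#filter_mset (\<lambda>q. q \<noteq> p) m. prime q" using fp by blast
      have "filter_mset (\<lambda>q. q \<noteq> p) m = {#}" using sumg_zero[OF fp'] R0 unfolding R_def by simp
      then have "m = replicate_mset (count m p) p"
        using multiset_partition[where M=m and P="\<lambda>q. q = p"] filter_eq_replicate_mset[where D=m and x=p] by (metis add_0_right)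
      then have "size m = 1" using Suc k0 by (metis size_replicate_mset One_nat_def)
      moreover have "size mb > 0" using mbne by (cases mb) auto
      moreover have "size mc > 0" using mcne by (cases mc) auto
      ultimately show False using m_def by simp
    qed
  qed
  then show "a \<in> atoms S" unfolding atoms_def units_S using aS an by auto
qed

lemma fin_dvd: assumes x: "x \<in> S" shows "finite {a \<in> atoms S. mon_dvd S a x}"
proof -
  obtain mx where mx: "\<forall>q\<in>#mx. prime q" "x = (\<Sum>q\<in>#mx. g q)" using S_repr1[OF x] by blast
  have sub: "{a \<in> atoms S. mon_dvd S a x} \<subseteq> g ` (set_mset mx \<union> {..nat \<lceil>x\<rceil>})"
  proof
    fix a assume "a \<in> {a \<in> atoms S. mon_dvd S a x}"
    then have a: "a \<in> prime_gens" "x - a \<in> S" unfolding atoms_S mon_dvd_def by auto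
    then obtain p where p: "prime p" "a = g p" unfolding pg_eq by auto
    obtain ms where ms: "\<forall>q\<in>#ms. prime q" "x - a = (\<Sum>q\<in>#ms. g q)" using S_repr1[OF a(2)] by blast
    have "p \<in># mx \<or> p \<le> nat \<lceil>x\<rceil>"
    proof (cases "p \<in># mx")
      case False
      have f1: "\<forall>q\<in>#mx. prime q \<and> q \<noteq> p" using mx False by auto
      obtain N1 D1 where ND1: "D1>0" "\<not> p dvd D1" "(\<Sum>q\<in>#mx. g q) = of_int N1 / of_nat D1"
        using padic[OF p(1) f1] by auto
      define R where "R = (\<Sum>q\<in>#filter_mset (\<lambda>q. q \<noteq> p) ms. g q)"
      have f2: "\<forall>q\<in>#filter_mset (\<lambda>q. q \<noteq> p) ms. prime q \<and> q \<noteq> p" using ms by auto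
      obtain N2 D2 where ND2: "D2>0" "\<not> p dvd D2" "R = of_int N2 / of_nat D2"
        using padic[OF p(1) f2] R_def by auto
      define c where "c = count ms p"
      have xe: "x = of_nat (c+1) * g p + R"
        using ms(2) p(2) split_sum[of ms p] R_def c_def by (simp add: algebra_simps)
      have "of_nat (c+1) * g p = of_int N1 / of_nat D1 - of_int N2 / of_nat D2"
        using xe mx ND1 ND2 by simp
      also have "\<dots> = of_int (N1 * D2 - N2 * D1) / of_nat (D1 * D2)"
        using ND1(1) ND2(1) by (simp add: field_simps)
      finally have e: "of_nat (c+1) * g p = of_int (N1 * D2 - N2 * D1) / of_nat (D1 * D2)" .
      have "\<not> p dvd D1 * D2" using ND1(2) ND2(2) p(1) prime_dvd_mult_nat by blast
      then have "p^2 dvd c+1" using key[OF p(1) e] ND1(1) ND2(1) by simp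
      then have "p^2 \<le> c+1" by (simp add: dvd_imp_le)
      then have h: "(of_nat (p^2)::rat) \<le> of_nat (c+1)" by (simp only: of_nat_le_iff)
      have "of_nat (c+1) * g p \<ge> of_nat (p^2) * g p"
        using mult_right_mono[OF h less_imp_le[OF g_pos[OF p(1)]]] .
      moreover have "of_nat (p^2) * g p = of_nat (p+1)"
      proof -
        have "(of_nat (p^2)::rat) \<noteq> 0" using prime_gt_0_nat[OF p(1)] by simp
        then show ?thesis unfolding g_def by simp
      qed
      moreover have "R \<ge> 0"
      proof -
        have f2': "\<forall>q\<in>#filter_mset (\<lambda>q. q \<noteq> p) ms. prime q" using f2 by blast
        show ?thesis unfolding R_def by (rule sumg_nonneg[OF f2'])
      qed
      ultimately have "of_nat p \<le> x" using xe by linarith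
      then have "int p \<le> \<lceil>x\<rceil>" by (metis ceiling_mono ceiling_of_nat)
      then have "p \<le> nat \<lceil>x\<rceil>" by (simp add: le_nat_iff)
      then show ?thesis by simp
    qed simp
    then show "a \<in> g ` (set_mset mx \<union> {..nat \<lceil>x\<rceil>})" using p(2) by auto
  qed
  then show ?thesis by (rule finite_subset) simp
qed

lemma size_bd: "(\<forall>a\<in>#m. e \<le> a) \<Longrightarrow> of_nat (size m) * e \<le> (sum_mset m :: rat)"
  by (induction m) (auto simp: algebra_simps)

lemma FFM_S: "FFM S"
  unfolding FFM_def
proof
  fix x assume x: "x \<in> S"
  obtain mx where mx: "\<forall>q\<in>#mx. prime q" "x = (\<Sum>q\<in>#mx. g q)" using S_repr1[OF x] by blast
  have "image_mset g mx \<in> factorizations S x"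
    unfolding factorizations_def atoms_S using mx by (auto simp: pg_eq)
  then have ne: "factorizations S x \<noteq> {}" by auto
  define A where "A = {a \<in> atoms S. mon_dvd S a x}"
  have finA: "finite A" using fin_dvd x A_def by simp
  have "\<forall>a\<in>prime_gens. a > 0" unfolding pg_eq using g_pos by auto
  then have Apos: "\<forall>a\<in>A. a > 0" using A_def atoms_S by auto
  define e where "e = (if A = {} then 1 else Min A)"
  have epos: "e > 0" using Apos finA e_def by auto
  have ele: "\<forall>a\<in>A. e \<le> a" using finA e_def by auto
  define n where "n = nat \<lceil>x / e\<rceil>"
  have sub1: "set_mset m \<subseteq> A \<and> size m \<le> n" if mf: "m \<in> factorizations S x" for m
  proof -
    have setm: "set_mset m \<subseteq> prime_gens" "sum_mset m = x"
      using mf unfolding factorizations_def atoms_S by auto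
    have sA: "set_mset m \<subseteq> A"
    proof
      fix a assume "a \<in># m"
      then obtain m' where m': "m = add_mset a m'" by (metis multi_member_split)
      have "sum_mset m' \<in> S" using setm m' by (intro sum_in_S) auto
      moreover have "x - a = sum_mset m'" using m' setm(2) by (auto simp: algebra_simps)
      ultimately have "mon_dvd S a x" unfolding mon_dvd_def by simp
      moreover have "a \<in> atoms S" using setm m' atoms_S by auto
      ultimately show "a \<in> A" unfolding A_def by simp
    qed
    have "of_nat (size m) * e \<le> x" using size_bd[of m e] sA ele setm by auto
    then have "of_nat (size m) \<le> x / e" using epos by (simp add: field_simps)
    then have "int (size m) \<le> \<lceil>x / e\<rceil>" by (metis ceiling_mono ceiling_of_nat)
    then have "size m \<le> n" unfolding n_def by (simp add: le_nat_iff)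
    then show ?thesis using sA by simp
  qed
  have "factorizations S x \<subseteq> mset ` {xs. set xs \<subseteq> A \<and> length xs \<le> n}"
  proof
    fix m assume "m \<in> factorizations S x"
    moreover obtain xs where "mset xs = m" using ex_mset by blast
    ultimately show "m \<in> mset ` {xs. set xs \<subseteq> A \<and> length xs \<le> n}"
      using sub1 by fastforce
  qed
  moreover have "finite (mset ` {xs. set xs \<subseteq> A \<and> length xs \<le> n})"
    using finite_lists_length_le[OF finA] by blast
  ultimately have "finite (factorizations S x)" by (rule finite_subset)
  then show "factorizations S x \<noteq> {} \<and> finite (factorizations S x)" using ne by simp
qed

theorem mainTheorem9:
  shows "atoms (mon_gen prime_gens) = prime_gens
    \<and> (\<forall>x\<in>mon_gen prime_gens. finite {a \<in> atoms (mon_gen prime_gens). mon_dvd (mon_gen prime_gens) a x})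
    \<and> FFM (mon_gen prime_gens)"
  using atoms_S fin_dvd FFM_S by blast

end
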